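(* Let $\mathsf{CS}$ be a constant specification for $\mathsf{J4C}^+$. For every set of formulas $T$ and formula $\phi$: if $T\models_{\mathsf{J4C}^+_{\mathsf{CS}}}\phi$, then $T\vdash_{\mathsf{J4C}^+_{\mathsf{CS}}}\phi$.
   Context: Language: countable sets $\mathsf{Const}$, $\mathsf{Var}$, $\mathsf{Prop}$; terms $t ::= c \mid x \mid t\cdot t \mid t+t \mid\ !t$; formulas $\phi ::= p \mid \neg\phi \mid \phi\wedge\phi \mid \phi\supset\phi \mid \phi>\phi \mid t{:}\phi$; $\mathsf{Tm},\mathsf{Fm}$ the sets of terms and formulas. Axiom schemes of $\mathsf{J4C}^+$: (A1) all instances of classical tautologies; (A2) $(\phi>(\psi\supset\chi))\supset((\phi>\psi)\supset(\phi>\chi))$; (A3) $\phi>\phi$; (A4) $(\phi>\psi)\supset(\phi\supset\psi)$; (A5) $(s{:}(\phi>\psi)\wedge t{:}\phi) > (s\cdot t){:}\psi$; (A6) $s{:}\phi > (s+t){:}\phi$; (A7) $t{:}\phi>(s+t){:}\phi$; (A9) $t{:}\phi > (!t){:}t{:}\phi$ (there is no scheme $t{:}\phi>\phi$). A constant specification $\mathsf{CS}$ is a set of $c{:}\phi$ with $c\in\mathsf{Const}$, $\phi$ an instance of these schemes. $\mathsf{J4C}^+_{\mathsf{CS}}$: these axioms and $\mathsf{CS}$; rules (MP) from $\phi,\phi\supset\psi$ infer $\psi$, and (RCN) from $\psi$ infer $\phi>\psi$. $T\vdash\phi$ iff $\vdash(\psi_1\wedge\cdots\wedge\psi_n)\supset\phi$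 for some $\psi_1,\dots,\psi_n\in T$, $n\ge0$. Relational models $\mathcal M=(W,W_N,R_{Fm},R_{Tm},V)$: $W$ nonempty, $W_N\subseteq W$ nonempty (normal states); $R_\phi\subseteq W_N\times W_N$ for each formula; $R_t\subseteq W\times W$ for each term; $V(w)\subseteq\mathsf{Prop}$ for $w\in W_N$, $V(w)\subseteq\mathsf{Fm}$ for $w\in W\setminus W_N$. Truth: at non-normal $w$, $w\models\phi$ iff $\phi\in V(w)$; at normal $w$: $p$ iff $p\in V(w)$, $\neg,\wedge,\supset$ classical, $\phi>\psi$ iff $R_\phi(w)\subseteq[\psi]$, $t{:}\phi$ iff $R_t(w)\subseteq[\phi]$, with $[\phi]=\{w\in W:w\models\phi\}$. A $\mathsf{J4C}^+_{\mathsf{CS}}$-model is a relational model such that for all $w\in W_N$: (1) $R_\phi(w)\subseteq[\phi]$; (2) if $w\in[\phi]$ then $w\in R_\phi(w)$; (3) $R_c(w)\subseteq[\phi]$ for each $c{:}\phi\in\mathsf{CS}$; (4) $R_{s+t}(w)\subseteq R_s(w)\cap R_t(w)$; (5) for all $v\in R_{s\cdot t}(w)$, all $\phi,\psi$: if $w\in[s{:}(\phi>\psi)\wedge t{:}\phi]$ then $v\in[\psi]$; (7) for all $t$ and $v,u\in W$, if $wR_{!t}v$ and $vR_tu$ then $wR_tu$ (no reflexivity requirement on $R_t$). $T\models_{\mathsf{J4C}^+_{\mathsf{CS}}}\phi$ iff for every such model and every $w\in W_N$ at which all members of $T$ are true, $\phi$ is true at $w$. *)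

theory Defs
  imports "HOL-Library.Countable"
begin

datatype ('c, 'v) tm =
    TConst 'c
  | TVar 'v
  | App "('c, 'v) tm" "('c, 'v) tm"
  | Plus "('c, 'v) tm" "('c, 'v) tm"
  | Bang "('c, 'v) tm"

datatype ('c, 'v, 'p) fm =
    Atom 'p
  | Neg "('c, 'v, 'p) fm"
  | And "('c, 'v, 'p) fm" "('c, 'v, 'p) fm"
  | Imp "('c, 'v, 'p) fm" "('c, 'v, 'p) fm"
  | Cond "('c, 'v, 'p) fm" "('c, 'v, 'p) fm"
  | Just "('c, 'v) tm" "('c, 'v, 'p) fm"

fun tval :: "(('c, 'v, 'p) fm \<Rightarrow> bool) \<Rightarrow> ('c, 'v, 'p) fm \<Rightarrow> bool" where
  "tval g (Atom p) = g (Atom p)"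
| "tval g (Neg a) = (\<not> tval g a)"
| "tval g (And a b) = (tval g a \<and> tval g b)"
| "tval g (Imp a b) = (tval g a \<longrightarrow> tval g b)"
| "tval g (Cond a b) = g (Cond a b)"
| "tval g (Just t a) = g (Just t a)"

definition taut_instance :: "('c, 'v, 'p) fm \<Rightarrow> bool" where
  "taut_instance \<phi> \<longleftrightarrow> (\<forall>g. tval g \<phi>)"

inductive axiom :: "('c, 'v, 'p) fm \<Rightarrow> bool" where
  A1: "taut_instance \<phi> \<Longrightarrow> axiom \<phi>"
| A2: "axiom (Imp (Cond \<phi> (Imp \<psi> \<chi>)) (Imp (Cond \<phi> \<psi>) (Cond \<phi> \<chi>)))"
| A3: "axiom (Cond \<phi> \<phi>)"
| A4: "axiom (Imp (Cond \<phi> \<psi>) (Imp \<phi> \<psi>))"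
| A5: "axiom (Cond (And (Just s (Cond \<phi> \<psi>)) (Just t \<phi>)) (Just (App s t) \<psi>))"
| A6: "axiom (Cond (Just s \<phi>) (Just (Plus s t) \<phi>))"
| A7: "axiom (Cond (Just t \<phi>) (Just (Plus s t) \<phi>))"
| A9: "axiom (Cond (Just t \<phi>) (Just (Bang t) (Just t \<phi>)))"

definition const_spec :: "('c, 'v, 'p) fm set \<Rightarrow> bool" where
  "const_spec CS \<longleftrightarrow> (\<forall>\<chi>\<in>CS. \<exists>c \<phi>. \<chi> = Just (TConst c) \<phi> \<and> axiom \<phi>)"

inductive deriv :: "('c, 'v, 'p) fm set \<Rightarrow> ('c, 'v, 'p) fm \<Rightarrow> bool" for CS where
  Ax: "axiom \<phi> \<Longrightarrow> deriv CS \<phi>"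
| CSax: "\<phi> \<in> CS \<Longrightarrow> deriv CS \<phi>"
| MP: "deriv CS \<phi> \<Longrightarrow> deriv CS (Imp \<phi> \<psi>) \<Longrightarrow> deriv CS \<psi>"
| RCN: "deriv CS \<psi> \<Longrightarrow> deriv CS (Cond \<phi> \<psi>)"

fun conjs :: "('c, 'v, 'p) fm list \<Rightarrow> ('c, 'v, 'p) fm" where
  "conjs [] = undefined"
| "conjs [\<psi>] = \<psi>"
| "conjs (\<psi> # \<psi>s) = And \<psi> (conjs \<psi>s)"

definition deriv_from :: "('c, 'v, 'p) fm set \<Rightarrow> ('c, 'v, 'p) fm set \<Rightarrow> ('c, 'v, 'p) fm \<Rightarrow> bool" where
  "deriv_from CS T \<phi> \<longleftrightarrow>
     deriv CS \<phi> \<or> (\<exists>\<psi>s. \<psi>s \<noteq> [] \<and> set \<psi>s \<subseteq> T \<and> deriv CS (Imp (conjs \<psi>s) \<phi>))"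

text \<open>V is split into VN (normal states, sets of propositional letters) and
  VA (non-normal states, arbitrary sets of formulas).\<close>
record ('c, 'v, 'p, 'w) rmodel =
  W  :: "'w set"
  WN :: "'w set"
  RF :: "('c, 'v, 'p) fm \<Rightarrow> ('w \<times> 'w) set"
  RT :: "('c, 'v) tm \<Rightarrow> ('w \<times> 'w) set"
  VN :: "'w \<Rightarrow> 'p set"
  VA :: "'w \<Rightarrow> ('c, 'v, 'p) fm set"

fun sat :: "('c, 'v, 'p, 'w) rmodel \<Rightarrow> 'w \<Rightarrow> ('c, 'v, 'p) fm \<Rightarrow> bool" where
  "sat M w (Atom p) = (if w \<in> WN M then p \<in> VN M w else Atom p \<in> VA M w)"
| "sat M w (Neg a) = (if w \<in> WN M then \<not> sat M w a else Neg a \<in> VA M w)"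
| "sat M w (And a b) = (if w \<in> WN M then sat M w a \<and> sat M w b else And a b \<in> VA M w)"
| "sat M w (Imp a b) = (if w \<in> WN M then (sat M w a \<longrightarrow> sat M w b) else Imp a b \<in> VA M w)"
| "sat M w (Cond a b) = (if w \<in> WN M then (\<forall>v. (w, v) \<in> RF M a \<longrightarrow> v \<in> W M \<and> sat M v b)
                         else Cond a b \<in> VA M w)"
| "sat M w (Just t a) = (if w \<in> WN M then (\<forall>v. (w, v) \<in> RT M t \<longrightarrow> v \<in> W M \<and> sat M v a)
                         else Just t a \<in> VA M w)"

definition ext :: "('c, 'v, 'p, 'w) rmodel \<Rightarrow> ('c, 'v, 'p) fm \<Rightarrow> 'w set" where
  "ext M \<phi> = {w \<in> W M. sat M w \<phi>}"

definition rel_model :: "('c, 'v, 'p, 'w) rmodel \<Rightarrow> bool" where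
  "rel_model M \<longleftrightarrow> W M \<noteq> {} \<and> WN M \<noteq> {} \<and> WN M \<subseteq> W M
     \<and> (\<forall>\<phi>. RF M \<phi> \<subseteq> WN M \<times> WN M) \<and> (\<forall>t. RT M t \<subseteq> W M \<times> W M)"

definition J4C_model :: "('c, 'v, 'p) fm set \<Rightarrow> ('c, 'v, 'p, 'w) rmodel \<Rightarrow> bool" where
  "J4C_model CS M \<longleftrightarrow> rel_model M \<and> (\<forall>w\<in>WN M.
       (\<forall>\<phi>. RF M \<phi> `` {w} \<subseteq> ext M \<phi>)
     \<and> (\<forall>\<phi>. w \<in> ext M \<phi> \<longrightarrow> (w, w) \<in> RF M \<phi>)
     \<and> (\<forall>c \<phi>. Just (TConst c) \<phi> \<in> CS \<longrightarrow> RT M (TConst c) `` {w} \<subseteq> ext M \<phi>)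
     \<and> (\<forall>s t. RT M (Plus s t) `` {w} \<subseteq> RT M s `` {w} \<inter> RT M t `` {w})
     \<and> (\<forall>s t. \<forall>v \<in> RT M (App s t) `` {w}. \<forall>\<phi> \<psi>.
           w \<in> ext M (And (Just s (Cond \<phi> \<psi>)) (Just t \<phi>)) \<longrightarrow> v \<in> ext M \<psi>)
     \<and> (\<forall>t v u. (w, v) \<in> RT M (Bang t) \<longrightarrow> (v, u) \<in> RT M t \<longrightarrow> (w, u) \<in> RT M t))"

text \<open>Semantic consequence. The carrier type of states is fixed to
  (formula set \<times> bool), which has room for the canonical model.\<close>
definition entails :: "('c, 'v, 'p) fm set \<Rightarrow> ('c, 'v, 'p) fm set \<Rightarrow> ('c, 'v, 'p) fm \<Rightarrow> bool" where
  "entails CS T \<phi> \<longleftrightarrow>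
     (\<forall>M :: ('c, 'v, 'p, ('c, 'v, 'p) fm set \<times> bool) rmodel.
        J4C_model CS M \<longrightarrow> (\<forall>w\<in>WN M. (\<forall>\<psi>\<in>T. sat M w \<psi>) \<longrightarrow> sat M w \<phi>))"

end

theory Submission
  imports Defs
begin

instance tm :: (countable, countable) countable by countable_datatype
instance fm :: (countable, countable, countable) countable by countable_datatype

definition bot :: "('c, 'v, 'p) fm" where
  "bot = Neg (Imp (Atom undefined) (Atom undefined))"

lemma tval_bot[simp]: "tval g bot = False" by (simp add: bot_def)

fun imps :: "('c, 'v, 'p) fm list \<Rightarrow> ('c, 'v, 'p) fm \<Rightarrow> ('c, 'v, 'p) fm" where
  "imps [] \<psi> = \<psi>"
| "imps (x # xs) \<psi> = Imp x (imps xs \<psi>)"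

lemma tval_imps[simp]: "tval g (imps L \<psi>) = ((\<forall>x\<in>set L. tval g x) \<longrightarrow> tval g \<psi>)"
  by (induct L) auto

lemma deriv_taut: "(\<And>g. tval g \<psi>) \<Longrightarrow> deriv CS \<psi>"
  by (rule deriv.Ax, rule axiom.A1, simp add: taut_instance_def)

lemma deriv_imps_MP: "deriv CS (imps Xs \<psi>) \<Longrightarrow> \<forall>x\<in>set Xs. deriv CS x \<Longrightarrow> deriv CS \<psi>"
  by (induct Xs) (auto intro: deriv.MP)

definition pf where "pf CS S \<psi> \<longleftrightarrow> (\<exists>L. set L \<subseteq> S \<and> deriv CS (imps L \<psi>))"

lemma pf_taut:
  assumes "\<And>g. (\<forall>x\<in>set Xs. tval g x) \<Longrightarrow> tval g \<psi>" "\<forall>x\<in>set Xs. pf CS S x"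
  shows "pf CS S \<psi>"
proof -
  have "\<forall>x\<in>set Xs. \<exists>L. set L \<subseteq> S \<and> deriv CS (imps L x)" using assms(2) unfolding pf_def by blast
  then obtain Lf where Lf: "\<forall>x\<in>set Xs. set (Lf x) \<subseteq> S \<and> deriv CS (imps (Lf x) x)" by metis
  define L where "L = concat (map Lf Xs)"
  have sub: "set L \<subseteq> S" using Lf unfolding L_def by auto
  have d1: "\<forall>x\<in>set Xs. deriv CS (imps L x)"
  proof
    fix x assume x: "x \<in> set Xs"
    have s: "set (Lf x) \<subseteq> set L" using x unfolding L_def by auto
    have "deriv CS (Imp (imps (Lf x) x) (imps L x))"
      by (rule deriv_taut) (use s in auto)
    then show "deriv CS (imps L x)" using Lf x by (blast intro: deriv.MP)
  qed
  have "deriv CS (imps (map (\<lambda>x. imps L x) Xs) (imps L \<psi>))"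
    by (rule deriv_taut) (use assms(1) in auto)
  then have "deriv CS (imps L \<psi>)" by (rule deriv_imps_MP) (use d1 in auto)
  then show ?thesis using sub pf_def by blast
qed

lemma pf_mono: "pf CS S \<psi> \<Longrightarrow> S \<subseteq> S' \<Longrightarrow> pf CS S' \<psi>"
  unfolding pf_def by blast

lemma pf_mem: "\<psi> \<in> S \<Longrightarrow> pf CS S \<psi>"
  unfolding pf_def by (rule exI[of _ "[\<psi>]"]) (auto intro: deriv_taut)

lemma pf_deriv: "deriv CS \<psi> \<Longrightarrow> pf CS S \<psi>"
  unfolding pf_def by (rule exI[of _ "[]"]) auto

lemma pf_ded: "pf CS (insert a S) b \<Longrightarrow> pf CS S (Imp a b)"
proof -
  assume "pf CS (insert a S) b"
  then obtain L where L: "set L \<subseteq> insert a S" "deriv CS (imps L b)" unfolding pf_def by blast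
  define L' where "L' = filter (\<lambda>x. x \<noteq> a) L"
  have s: "set L' \<subseteq> S" using L(1) unfolding L'_def by auto
  have "deriv CS (Imp (imps L b) (imps L' (Imp a b)))"
    by (rule deriv_taut) (auto simp: L'_def)
  then have "deriv CS (imps L' (Imp a b))" using L(2) by (blast intro: deriv.MP)
  then show ?thesis using s pf_def by blast
qed

definition consis where "consis CS S \<longleftrightarrow> \<not> pf CS S bot"
definition mcs where "mcs CS G \<longleftrightarrow> consis CS G \<and> (\<forall>\<psi>. consis CS (insert \<psi> G) \<longrightarrow> \<psi> \<in> G)"

lemma mcs_closed: assumes "mcs CS G" "pf CS G \<psi>" shows "\<psi> \<in> G"
proof (rule ccontr)
  assume "\<psi> \<notin> G"
  then have "pf CS (insert \<psi> G) bot" using assms(1) unfolding mcs_def consis_def by blast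
  then have "pf CS G (Imp \<psi> bot)" by (rule pf_ded)
  then have "pf CS G bot" using assms(2) by (intro pf_taut[of "[\<psi>, Imp \<psi> bot]"]) auto
  then show False using assms(1) unfolding mcs_def consis_def by blast
qed

lemma mcs_taut: "mcs CS G \<Longrightarrow> (\<And>g. (\<forall>x\<in>set Xs. tval g x) \<Longrightarrow> tval g \<psi>) \<Longrightarrow> set Xs \<subseteq> G \<Longrightarrow> \<psi> \<in> G"
  by (rule mcs_closed, assumption, rule pf_taut, assumption) (auto intro: pf_mem)

lemma mcs_neg: assumes "mcs CS G" shows "(Neg \<psi> \<in> G) = (\<psi> \<notin> G)"
proof
  assume "Neg \<psi> \<in> G"
  show "\<psi> \<notin> G"
  proof
    assume "\<psi> \<in> G"
    then have "bot \<in> G" using \<open>Neg \<psi> \<in> G\<close> by (intro mcs_taut[OF assms, of "[\<psi>, Neg \<psi>]"]) auto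
    then show False using assms pf_mem unfolding mcs_def consis_def by blast
  qed
next
  assume "\<psi> \<notin> G"
  then have "pf CS (insert \<psi> G) bot" using assms(1) unfolding mcs_def consis_def by blast
  then have "pf CS G (Imp \<psi> bot)" by (rule pf_ded)
  then have "pf CS G (Neg \<psi>)" by (intro pf_taut[of "[Imp \<psi> bot]"]) auto
  then show "Neg \<psi> \<in> G" by (rule mcs_closed[OF assms])
qed

lemma mcs_and: assumes "mcs CS G" shows "(And a b \<in> G) = (a \<in> G \<and> b \<in> G)"
proof
  assume "And a b \<in> G"
  then show "a \<in> G \<and> b \<in> G"
    using mcs_taut[OF assms, of "[And a b]" a] mcs_taut[OF assms, of "[And a b]" b] by auto
next
  assume "a \<in> G \<and> b \<in> G"
  then show "And a b \<in> G" using mcs_taut[OF assms, of "[a, b]" "And a b"] by auto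
qed

lemma mcs_imp: assumes "mcs CS G" shows "(Imp a b \<in> G) = (a \<in> G \<longrightarrow> b \<in> G)"
proof
  assume "Imp a b \<in> G"
  then show "a \<in> G \<longrightarrow> b \<in> G" using mcs_taut[OF assms, of "[a, Imp a b]" b] by auto
next
  assume h: "a \<in> G \<longrightarrow> b \<in> G"
  show "Imp a b \<in> G"
  proof (cases "a \<in> G")
    case True
    then show ?thesis using h mcs_taut[OF assms, of "[b]" "Imp a b"] by auto
  next
    case False
    then have "Neg a \<in> G" using mcs_neg[OF assms] by blast
    then show ?thesis using mcs_taut[OF assms, of "[Neg a]" "Imp a b"] by auto
  qed
qed

lemma mcs_deriv: "mcs CS G \<Longrightarrow> deriv CS \<psi> \<Longrightarrow> \<psi> \<in> G"
  by (rule mcs_closed, assumption, rule pf_deriv)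

lemma mcs_cond_mp: assumes "mcs CS G" "Cond a b \<in> G" "a \<in> G" shows "b \<in> G"
proof -
  have "Imp (Cond a b) (Imp a b) \<in> G" by (rule mcs_deriv[OF assms(1)]) (intro deriv.Ax axiom.A4)
  then show ?thesis using assms mcs_imp[OF assms(1)] by blast
qed

lemma mcs_cond_list: assumes "mcs CS G"
  shows "\<forall>x\<in>set L. Cond a x \<in> G \<Longrightarrow> Cond a (imps L c) \<in> G \<Longrightarrow> Cond a c \<in> G"
proof (induct L)
  case Nil then show ?case by simp
next
  case (Cons x L)
  have "Imp (Cond a (Imp x (imps L c))) (Imp (Cond a x) (Cond a (imps L c))) \<in> G"
    by (rule mcs_deriv[OF assms(1)]) (intro deriv.Ax axiom.A2)
  then have "Cond a (imps L c) \<in> G" using Cons.prems mcs_imp[OF assms] by auto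
  then show ?case using Cons by auto
qed

lemma mcs_cond_pf: assumes "mcs CS G" "pf CS {b. Cond a b \<in> G} c" shows "Cond a c \<in> G"
proof -
  obtain L where L: "set L \<subseteq> {b. Cond a b \<in> G}" "deriv CS (imps L c)" using assms(2) pf_def by blast
  have "Cond a (imps L c) \<in> G" using L(2) by (intro mcs_deriv[OF assms(1)] deriv.RCN)
  then show ?thesis using mcs_cond_list[OF assms(1)] L(1) by blast
qed

section \<open>Lindenbaum\<close>

fun chain :: "('c::countable, 'v::countable, 'p::countable) fm set \<Rightarrow> ('c, 'v, 'p) fm set \<Rightarrow> nat \<Rightarrow> ('c, 'v, 'p) fm set" where
  "chain CS S 0 = S"
| "chain CS S (Suc n) = (if consis CS (insert (from_nat n) (chain CS S n))
     then insert (from_nat n) (chain CS S n) else chain CS S n)"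

lemma chain_Suc_mono: "chain CS S n \<subseteq> chain CS S (Suc n)" by auto

lemma chain_mono: "m \<le> n \<Longrightarrow> chain CS S m \<subseteq> chain CS S n"
proof (induct n)
  case 0 then show ?case by simp
next
  case (Suc n)
  then show ?case using chain_Suc_mono[of CS S n] by (cases "m = Suc n") auto
qed

lemma consis_anti: "consis CS S' \<Longrightarrow> S \<subseteq> S' \<Longrightarrow> consis CS S"
  unfolding consis_def using pf_mono by blast

lemma chain_consis: "consis CS S \<Longrightarrow> consis CS (chain CS S n)"
  by (induct n) auto

lemma chain_fin: "set L \<subseteq> (\<Union>n. chain CS S n) \<Longrightarrow> \<exists>n. set L \<subseteq> chain CS S n"
proof (induct L)
  case Nil then show ?case by simp
next
  case (Cons x L)
  then obtain n where n: "set L \<subseteq> chain CS S n" by auto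
  obtain m where m: "x \<in> chain CS S m" using Cons.prems by auto
  have "set (x # L) \<subseteq> chain CS S (max n m)"
    using n m chain_mono[of n "max n m" CS S] chain_mono[of m "max n m" CS S] by auto
  then show ?case by blast
qed

lemma lindenbaum:
  fixes S :: "('c::countable, 'v::countable, 'p::countable) fm set"
  assumes "consis CS S"
  shows "\<exists>G. S \<subseteq> G \<and> mcs CS G"
proof -
  define U where "U = (\<Union>n. chain CS S n)"
  have "S \<subseteq> U" unfolding U_def using chain.simps(1)[of CS S] by blast
  moreover have "consis CS U"
    unfolding consis_def
  proof
    assume "pf CS U bot"
    then obtain L where L: "set L \<subseteq> U" "deriv CS (imps L bot)" unfolding pf_def by blast
    obtain n where "set L \<subseteq> chain CS S n" using chain_fin L(1) unfolding U_def by blast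
    then have "pf CS (chain CS S n) bot" using L(2) pf_def by blast
    then show False using chain_consis[OF assms, of n] consis_def by blast
  qed
  moreover have "\<forall>\<psi>. consis CS (insert \<psi> U) \<longrightarrow> \<psi> \<in> U"
  proof (intro allI impI)
    fix \<psi> assume c: "consis CS (insert \<psi> U)"
    define n where "n = to_nat \<psi>"
    have fn: "from_nat n = \<psi>" unfolding n_def by simp
    have "insert \<psi> (chain CS S n) \<subseteq> insert \<psi> U" unfolding U_def by blast
    then have "consis CS (insert (from_nat n) (chain CS S n))" using consis_anti[OF c] fn by simp
    then have "\<psi> \<in> chain CS S (Suc n)" using fn by simp
    then show "\<psi> \<in> U" unfolding U_def by blast
  qed
  ultimately show ?thesis unfolding mcs_def by blast
qed

section \<open>Canonical model\<close>

definition cmodel :: "('c::countable, 'v::countable, 'p::countable) fm set \<Rightarrow> ('c, 'v, 'p, ('c, 'v, 'p) fm set \<times> bool) rmodel" where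
  "cmodel CS = \<lparr>W = UNIV, WN = {(G, True) | G. mcs CS G},
     RF = (\<lambda>a. {((G, True), (D, True)) | G D. mcs CS G \<and> mcs CS D \<and> {b. Cond a b \<in> G} \<subseteq> D}),
     RT = (\<lambda>t. {((G, True), (X, False)) | G X. mcs CS G \<and> {b. Just t b \<in> G} \<subseteq> X}),
     VN = (\<lambda>w. {p. Atom p \<in> fst w}), VA = fst\<rparr>"

lemma cm_simps[simp]:
  "W (cmodel CS) = UNIV"
  "((G, b) \<in> WN (cmodel CS)) = (b \<and> mcs CS G)"
  "VN (cmodel CS) w = {p. Atom p \<in> fst w}"
  "VA (cmodel CS) w = fst w"
  by (auto simp: cmodel_def)

lemma RF_iff: "(w, v) \<in> RF (cmodel CS) a \<longleftrightarrow>
   (\<exists>G D. w = (G, True) \<and> v = (D, True) \<and> mcs CS G \<and> mcs CS D \<and> {b. Cond a b \<in> G} \<subseteq> D)"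
  by (auto simp: cmodel_def)

lemma RT_iff: "(w, v) \<in> RT (cmodel CS) t \<longleftrightarrow>
   (\<exists>G X. w = (G, True) \<and> v = (X, False) \<and> mcs CS G \<and> {b. Just t b \<in> G} \<subseteq> X)"
  by (auto simp: cmodel_def)

lemma nonnormal_sat: "sat (cmodel CS) (X, False) \<psi> = (\<psi> \<in> X)"
  by (cases \<psi>) auto

lemma truth: "mcs CS G \<Longrightarrow> sat (cmodel CS) (G, True) \<psi> = (\<psi> \<in> G)"
proof (induct \<psi> arbitrary: G)
  case (Atom p) then show ?case by simp
next
  case (Neg a) then show ?case using mcs_neg[OF Neg.prems] by simp
next
  case (And a b) then show ?case using mcs_and[OF And.prems] by simp
next
  case (Imp a b) then show ?case using mcs_imp[OF Imp.prems] by simp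
next
  case (Cond a b)
  have "sat (cmodel CS) (G, True) (Cond a b) = (\<forall>D. mcs CS D \<and> {x. Cond a x \<in> G} \<subseteq> D \<longrightarrow> b \<in> D)"
    using Cond by (auto simp: RF_iff)
  also have "\<dots> = (Cond a b \<in> G)"
  proof
    assume h: "\<forall>D. mcs CS D \<and> {x. Cond a x \<in> G} \<subseteq> D \<longrightarrow> b \<in> D"
    show "Cond a b \<in> G"
    proof (rule ccontr)
      assume nb: "Cond a b \<notin> G"
      have "consis CS (insert (Neg b) {x. Cond a x \<in> G})"
        unfolding consis_def
      proof
        assume "pf CS (insert (Neg b) {x. Cond a x \<in> G}) bot"
        then have "pf CS {x. Cond a x \<in> G} (Imp (Neg b) bot)" by (rule pf_ded)
        then have "pf CS {x. Cond a x \<in> G} b" by (intro pf_taut[of "[Imp (Neg b) bot]"]) auto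
        then show False using mcs_cond_pf[OF Cond.prems] nb by blast
      qed
      then obtain D where D: "insert (Neg b) {x. Cond a x \<in> G} \<subseteq> D" "mcs CS D"
        using lindenbaum by blast
      then have "b \<in> D" using h by blast
      moreover have "Neg b \<in> D" using D by blast
      ultimately show False using mcs_neg[OF D(2)] by blast
    qed
  next
    assume "Cond a b \<in> G"
    then show "\<forall>D. mcs CS D \<and> {x. Cond a x \<in> G} \<subseteq> D \<longrightarrow> b \<in> D" by blast
  qed
  finally show ?case .
next
  case (Just t a)
  have "sat (cmodel CS) (G, True) (Just t a) = (\<forall>X. {x. Just t x \<in> G} \<subseteq> X \<longrightarrow> a \<in> X)"
    using Just by (auto simp: RT_iff nonnormal_sat)
  also have "\<dots> = (Just t a \<in> G)" by blast
  finally show ?case .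
qed

lemma cmodel_J4C:
  assumes G0: "mcs CS G0"
  shows "J4C_model CS (cmodel CS)"
  unfolding J4C_model_def
proof (intro conjI ballI)
  have "(G0, True) \<in> WN (cmodel CS)" using G0 by simp
  then have ne: "WN (cmodel CS) \<noteq> {}" by blast
  then show "rel_model (cmodel CS)"
    unfolding rel_model_def by (auto simp: RF_iff RT_iff simp del: cm_simps(2) intro: ne) (auto simp: RF_iff RT_iff)
next
  fix w assume w: "w \<in> WN (cmodel CS)"
  then obtain G where G: "w = (G, True)" "mcs CS G" by (cases w) auto
  have ext_iff: "\<And>\<psi>. w \<in> ext (cmodel CS) \<psi> \<longleftrightarrow> \<psi> \<in> G"
    using truth[OF G(2)] G(1) by (simp add: ext_def)
  have extN: "\<And>X \<psi>. (X, False) \<in> ext (cmodel CS) \<psi> \<longleftrightarrow> \<psi> \<in> X"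
    by (simp add: ext_def nonnormal_sat)
  have extM: "\<And>D \<psi>. mcs CS D \<Longrightarrow> (D, True) \<in> ext (cmodel CS) \<psi> \<longleftrightarrow> \<psi> \<in> D"
    by (simp add: ext_def truth)
  have A3: "\<And>a. Cond a a \<in> G" by (rule mcs_deriv[OF G(2)]) (intro deriv.Ax axiom.A3)
  show "\<forall>\<phi>. RF (cmodel CS) \<phi> `` {w} \<subseteq> ext (cmodel CS) \<phi>"
    using A3 G extM by (auto simp: RF_iff) blast
  show "\<forall>\<phi>. w \<in> ext (cmodel CS) \<phi> \<longrightarrow> (w, w) \<in> RF (cmodel CS) \<phi>"
    using G ext_iff mcs_cond_mp[OF G(2)] by (auto simp: RF_iff)
  show "\<forall>c \<phi>. Just (TConst c) \<phi> \<in> CS \<longrightarrow> RT (cmodel CS) (TConst c) `` {w} \<subseteq> ext (cmodel CS) \<phi>"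
  proof (intro allI impI)
    fix c \<phi> assume "Just (TConst c) \<phi> \<in> CS"
    then have "Just (TConst c) \<phi> \<in> G" by (intro mcs_deriv[OF G(2)] deriv.CSax)
    then show "RT (cmodel CS) (TConst c) `` {w} \<subseteq> ext (cmodel CS) \<phi>"
      using G extN by (auto simp: RT_iff)
  qed
  show "\<forall>s t. RT (cmodel CS) (Plus s t) `` {w} \<subseteq> RT (cmodel CS) s `` {w} \<inter> RT (cmodel CS) t `` {w}"
  proof (intro allI subsetI)
    fix s t v assume "v \<in> RT (cmodel CS) (Plus s t) `` {w}"
    then obtain X where X: "v = (X, False)" "{b. Just (Plus s t) b \<in> G} \<subseteq> X"
      using G by (auto simp: RT_iff)
    have "{b. Just s b \<in> G} \<subseteq> X"
    proof
      fix b assume "b \<in> {b. Just s b \<in> G}"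
      moreover have "Cond (Just s b) (Just (Plus s t) b) \<in> G"
        by (rule mcs_deriv[OF G(2)]) (intro deriv.Ax axiom.A6)
      ultimately show "b \<in> X" using X mcs_cond_mp[OF G(2)] by blast
    qed
    moreover have "{b. Just t b \<in> G} \<subseteq> X"
    proof
      fix b assume "b \<in> {b. Just t b \<in> G}"
      moreover have "Cond (Just t b) (Just (Plus s t) b) \<in> G"
        by (rule mcs_deriv[OF G(2)]) (intro deriv.Ax axiom.A7)
      ultimately show "b \<in> X" using X mcs_cond_mp[OF G(2)] by blast
    qed
    ultimately show "v \<in> RT (cmodel CS) s `` {w} \<inter> RT (cmodel CS) t `` {w}"
      using G X by (auto simp: RT_iff)
  qed
  show "\<forall>s t. \<forall>v \<in> RT (cmodel CS) (App s t) `` {w}. \<forall>\<phi> \<psi>.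
           w \<in> ext (cmodel CS) (And (Just s (Cond \<phi> \<psi>)) (Just t \<phi>)) \<longrightarrow> v \<in> ext (cmodel CS) \<psi>"
  proof (intro allI ballI impI)
    fix s t v \<phi> \<psi>
    assume v: "v \<in> RT (cmodel CS) (App s t) `` {w}"
      and h: "w \<in> ext (cmodel CS) (And (Just s (Cond \<phi> \<psi>)) (Just t \<phi>))"
    obtain X where X: "v = (X, False)" "{b. Just (App s t) b \<in> G} \<subseteq> X"
      using v G by (auto simp: RT_iff)
    have "Cond (And (Just s (Cond \<phi> \<psi>)) (Just t \<phi>)) (Just (App s t) \<psi>) \<in> G"
      by (rule mcs_deriv[OF G(2)]) (intro deriv.Ax axiom.A5)
    then have "Just (App s t) \<psi> \<in> G" using h ext_iff mcs_cond_mp[OF G(2)] by blast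
    then show "v \<in> ext (cmodel CS) \<psi>" using X extN by blast
  qed
  show "\<forall>t v u. (w, v) \<in> RT (cmodel CS) (Bang t) \<longrightarrow> (v, u) \<in> RT (cmodel CS) t \<longrightarrow> (w, u) \<in> RT (cmodel CS) t"
    by (auto simp: RT_iff)
qed

lemma conjs_tval: "L \<noteq> [] \<Longrightarrow> tval g (conjs L) = (\<forall>x\<in>set L. tval g x)"
  by (induct L rule: conjs.induct) auto

theorem mainTheorem14:
  fixes CS :: "('c::countable, 'v::countable, 'p::countable) fm set"
    and T :: "('c, 'v, 'p) fm set"
    and \<phi> :: "('c, 'v, 'p) fm"
  assumes "const_spec CS"
    and "entails CS T \<phi>"
  shows "deriv_from CS T \<phi>"
proof (rule ccontr)
  assume nd: "\<not> deriv_from CS T \<phi>"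
  have "consis CS (insert (Neg \<phi>) T)"
    unfolding consis_def
  proof
    assume "pf CS (insert (Neg \<phi>) T) bot"
    then have "pf CS T (Imp (Neg \<phi>) bot)" by (rule pf_ded)
    then have "pf CS T \<phi>" by (intro pf_taut[of "[Imp (Neg \<phi>) bot]"]) auto
    then obtain L where L: "set L \<subseteq> T" "deriv CS (imps L \<phi>)" unfolding pf_def by blast
    show False
    proof (cases "L = []")
      case True then show False using L nd unfolding deriv_from_def by simp
    next
      case False
      have "deriv CS (Imp (imps L \<phi>) (Imp (conjs L) \<phi>))"
        by (rule deriv_taut) (simp add: conjs_tval[OF False])
      then have "deriv CS (Imp (conjs L) \<phi>)" using L(2) by (blast intro: deriv.MP)
      then show False using L(1) False nd unfolding deriv_from_def by blast
    qed
  qed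
  then obtain G where G: "insert (Neg \<phi>) T \<subseteq> G" "mcs CS G" using lindenbaum by blast
  have M: "J4C_model CS (cmodel CS)" by (rule cmodel_J4C[OF G(2)])
  have "\<forall>\<psi>\<in>T. sat (cmodel CS) (G, True) \<psi>" using G truth[OF G(2)] by blast
  then have "sat (cmodel CS) (G, True) \<phi>"
    using assms(2) M G(2) unfolding entails_def by simp
  then have "\<phi> \<in> G" using truth[OF G(2)] by simp
  moreover have "Neg \<phi> \<in> G" using G by blast
  ultimately show False using mcs_neg[OF G(2)] by blast
qed

end
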